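(* Let $G=(V,E,I,\{s,t\})$ be a grapht (possibly infinite). Suppose $\mathcal{P}$ is a linkage of $s$ with $|\delta(t)\setminus E(\mathcal{P})|=1$, and that there is no linkage $\mathcal{P}'$ of $s$ with $\delta_{\mathcal{P}'}(t)\subsetneq\delta_{\mathcal{P}}(t)$. Then $|\delta(t)\setminus E(\mathcal{Q})|\le1$ for every linkage $\mathcal{Q}$ of $s$.
   Context: Graphs may have parallel edges but no loops; all paths are finite. Here the terminal set is $\{s,t\}$, so $T$-paths are $st$-paths. $\delta(x)$ is the set of edges incident with $x$. For a system $\mathcal{R}$ of paths, $E(\mathcal{R})$ is the union of their edge sets and $\delta_{\mathcal{R}}(t)=\delta(t)\cap E(\mathcal{R})$. A system of edge-disjoint $st$-paths links $s$ if it covers $\delta(s)$; it is a linkage of $s$ if it links $s$ and each of its paths contains an edge of $\delta(s)$ (minimal with respect to linking $s$). *)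

theory Defs
  imports Main
begin

text \<open>A graph (parallel edges allowed, no loops, possibly infinite) is given by a vertex
set V, an edge set E and an incidence map I sending each edge to its set of two ends.\<close>

definition is_graph :: "'v set \<Rightarrow> 'e set \<Rightarrow> ('e \<Rightarrow> 'v set) \<Rightarrow> bool" where
  "is_graph V E I \<longleftrightarrow> (\<forall>e\<in>E. I e \<subseteq> V \<and> card (I e) = 2)"

definition is_grapht :: "'v set \<Rightarrow> 'e set \<Rightarrow> ('e \<Rightarrow> 'v set) \<Rightarrow> 'v \<Rightarrow> 'v \<Rightarrow> bool" where
  "is_grapht V E I s t \<longleftrightarrow> is_graph V E I \<and> s \<in> V \<and> t \<in> V \<and> s \<noteq> t"

definition delta :: "'e set \<Rightarrow> ('e \<Rightarrow> 'v set) \<Rightarrow> 'v \<Rightarrow> 'e set" where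
  "delta E I x = {e \<in> E. x \<in> I e}"

definition is_path :: "'v set \<Rightarrow> 'e set \<Rightarrow> ('e \<Rightarrow> 'v set) \<Rightarrow> 'v list \<times> 'e list \<Rightarrow> bool" where
  "is_path V E I p \<longleftrightarrow> (case p of (vs, es) \<Rightarrow>
      vs \<noteq> [] \<and> length es = length vs - 1 \<and> distinct vs \<and> set vs \<subseteq> V \<and> set es \<subseteq> E \<and>
      (\<forall>i < length es. I (es ! i) = {vs ! i, vs ! Suc i}))"

definition st_path :: "'v set \<Rightarrow> 'e set \<Rightarrow> ('e \<Rightarrow> 'v set) \<Rightarrow> 'v \<Rightarrow> 'v \<Rightarrow> 'v list \<times> 'e list \<Rightarrow> bool" where
  "st_path V E I s t p \<longleftrightarrow> is_path V E I p \<and> hd (fst p) = s \<and> last (fst p) = t"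

definition path_edges :: "'v list \<times> 'e list \<Rightarrow> 'e set" where
  "path_edges p = set (snd p)"

definition sys_edges :: "('v list \<times> 'e list) set \<Rightarrow> 'e set" where
  "sys_edges R = (\<Union>p\<in>R. path_edges p)"

definition delta_sys :: "'e set \<Rightarrow> ('e \<Rightarrow> 'v set) \<Rightarrow> ('v list \<times> 'e list) set \<Rightarrow> 'v \<Rightarrow> 'e set" where
  "delta_sys E I R x = delta E I x \<inter> sys_edges R"

definition edge_disjoint_st_system ::
  "'v set \<Rightarrow> 'e set \<Rightarrow> ('e \<Rightarrow> 'v set) \<Rightarrow> 'v \<Rightarrow> 'v \<Rightarrow> ('v list \<times> 'e list) set \<Rightarrow> bool" where
  "edge_disjoint_st_system V E I s t R \<longleftrightarrow>
     (\<forall>p\<in>R. st_path V E I s t p) \<and>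
     (\<forall>p\<in>R. \<forall>q\<in>R. p \<noteq> q \<longrightarrow> path_edges p \<inter> path_edges q = {})"

definition links ::
  "'v set \<Rightarrow> 'e set \<Rightarrow> ('e \<Rightarrow> 'v set) \<Rightarrow> 'v \<Rightarrow> 'v \<Rightarrow> ('v list \<times> 'e list) set \<Rightarrow> bool" where
  "links V E I s t R \<longleftrightarrow> edge_disjoint_st_system V E I s t R \<and> delta E I s \<subseteq> sys_edges R"

definition linkage ::
  "'v set \<Rightarrow> 'e set \<Rightarrow> ('e \<Rightarrow> 'v set) \<Rightarrow> 'v \<Rightarrow> 'v \<Rightarrow> ('v list \<times> 'e list) set \<Rightarrow> bool" where
  "linkage V E I s t R \<longleftrightarrow> links V E I s t R \<and>
     (\<forall>p\<in>R. path_edges p \<inter> delta E I s \<noteq> {})"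

end

theory Submission
  imports Defs
begin

definition first_e :: "'v list \<times> 'e list \<Rightarrow> 'e" where "first_e p = hd (snd p)"
definition last_e :: "'v list \<times> 'e list \<Rightarrow> 'e" where "last_e p = last (snd p)"

lemma path_D:
  assumes "is_path V E I (vs, es)"
  shows "vs \<noteq> []" "length es = length vs - 1" "distinct vs" "set vs \<subseteq> V" "set es \<subseteq> E"
    "\<And>i. i < length es \<Longrightarrow> I (es ! i) = {vs ! i, vs ! Suc i}"
  using assms unfolding is_path_def by auto

lemma path_distinct_edges:
  assumes "is_path V E I (vs, es)"
  shows "distinct es"
proof -
  note P = path_D[OF assms]
  show ?thesis unfolding distinct_conv_nth
  proof (intro allI impI)
    fix i j assume ij: "i < length es" "j < length es" "i \<noteq> j"
    show "es ! i \<noteq> es ! j"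
    proof
      assume eq: "es ! i = es ! j"
      have seq: "{vs ! i, vs ! Suc i} = {vs ! j, vs ! Suc j}" using P(6)[OF ij(1)] P(6)[OF ij(2)] eq by simp
      have lens: "i < length vs" "Suc i < length vs" "j < length vs" "Suc j < length vs"
        using ij P(2) by auto
      have m1: "vs ! i \<in> {vs ! j, vs ! Suc j}" using seq by (metis insertI1)
      have m2: "vs ! j \<in> {vs ! i, vs ! Suc i}" using seq by (metis insertI1)
      have a1: "vs ! i = vs ! j \<Longrightarrow> i = j" using nth_eq_iff_index_eq[OF P(3) lens(1) lens(3)] by simp
      have a2: "vs ! i = vs ! Suc j \<Longrightarrow> i = Suc j" using nth_eq_iff_index_eq[OF P(3) lens(1) lens(4)] by simp
      have a3: "vs ! j = vs ! Suc i \<Longrightarrow> j = Suc i" using nth_eq_iff_index_eq[OF P(3) lens(3) lens(2)] by simp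
      have "i = Suc j" using m1 a1 a2 ij(3) by blast
      moreover have "j = Suc i" using m2 a1 a3 ij(3) by (metis insertE singletonD)
      ultimately show False by simp
    qed
  qed
qed

lemma st_path_D:
  assumes "st_path V E I s t (vs, es)"
  shows "is_path V E I (vs, es)" "hd vs = s" "last vs = t"
  using assms unfolding st_path_def by simp_all

lemma st_path_len:
  assumes "st_path V E I s t (vs, es)" "s \<noteq> t"
  shows "length vs \<ge> 2" "es \<noteq> []"
proof -
  note P = path_D[OF st_path_D(1)[OF assms(1)]]
  have "length vs > 0" using P(1) by simp
  show "length vs \<ge> 2"
  proof (rule ccontr)
    assume "\<not> 2 \<le> length vs" hence "length vs = 1" using \<open>length vs > 0\<close> by linarith
    hence "hd vs = last vs" using P(1) by (simp add: hd_conv_nth last_conv_nth)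
    thus False using st_path_D[OF assms(1)] assms(2) by simp
  qed
  hence "length vs \<ge> 2" .
  thus "es \<noteq> []" using P(2) by auto
qed

lemma st_path_hd: assumes "st_path V E I s t (vs, es)" shows "vs ! 0 = s"
  using st_path_D[OF assms] path_D(1)[OF st_path_D(1)[OF assms]] by (simp add: hd_conv_nth)

lemma st_path_last: assumes "st_path V E I s t (vs, es)" shows "vs ! (length vs - 1) = t"
  using st_path_D[OF assms] path_D(1)[OF st_path_D(1)[OF assms]] by (simp add: last_conv_nth)

lemma st_edge_s:
  assumes "st_path V E I s t (vs, es)" "s \<noteq> t" "e \<in> set es" "s \<in> I e"
  shows "e = hd es"
proof -
  note P = path_D[OF st_path_D(1)[OF assms(1)]]
  obtain i where i: "i < length es" "es ! i = e" using assms(3) by (auto simp: in_set_conv_nth)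
  have "s = vs ! i \<or> s = vs ! Suc i" using P(6)[OF i(1)] i(2) assms(4) by auto
  moreover have "vs ! 0 = s" using st_path_hd[OF assms(1)] .
  moreover have "i < length vs" "Suc i < length vs" "0 < length vs" using i P(2) by auto
  ultimately have "i = 0" using nth_eq_iff_index_eq[OF P(3)] by (metis nat.distinct(1))
  thus ?thesis using i st_path_len[OF assms(1,2)] by (simp add: hd_conv_nth)
qed

lemma st_edge_t:
  assumes "st_path V E I s t (vs, es)" "s \<noteq> t" "e \<in> set es" "t \<in> I e"
  shows "e = last es"
proof -
  note P = path_D[OF st_path_D(1)[OF assms(1)]]
  obtain i where i: "i < length es" "es ! i = e" using assms(3) by (auto simp: in_set_conv_nth)
  have "t = vs ! i \<or> t = vs ! Suc i" using P(6)[OF i(1)] i(2) assms(4) by auto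
  moreover have "vs ! (length vs - 1) = t" using st_path_last[OF assms(1)] .
  moreover have "i < length vs" "Suc i < length vs" "length vs - 1 < length vs" using i P(2) by auto
  ultimately have "Suc i = length vs - 1" using nth_eq_iff_index_eq[OF P(3)] i P(2) by (metis less_irrefl)
  hence "i = length es - 1" using P(2) by simp
  thus ?thesis using i st_path_len[OF assms(1,2)] by (simp add: last_conv_nth)
qed

lemma st_first_last:
  assumes "st_path V E I s t (vs, es)" "s \<noteq> t"
  shows "hd es \<in> delta E I s" "last es \<in> delta E I t" "hd es \<in> set es" "last es \<in> set es"
proof -
  note P = path_D[OF st_path_D(1)[OF assms(1)]]
  have ne: "es \<noteq> []" using st_path_len[OF assms] by simp
  have "I (es ! 0) = {vs ! 0, vs ! 1}" using P(6)[of 0] ne by auto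
  thus "hd es \<in> delta E I s" using ne P(5) st_path_hd[OF assms(1)] by (auto simp: delta_def hd_conv_nth)
  have l: "length es - 1 < length es" using ne by auto
  have "I (es ! (length es - 1)) = {vs ! (length es - 1), vs ! Suc (length es - 1)}" using P(6)[OF l] .
  moreover have "Suc (length es - 1) = length vs - 1" using ne P(2) by (cases es) auto
  ultimately have "t \<in> I (last es)" using ne st_path_last[OF assms(1)] by (simp add: last_conv_nth)
  moreover have "last es \<in> E" using ne P(5) by auto
  ultimately show "last es \<in> delta E I t" by (simp add: delta_def)
  show "hd es \<in> set es" "last es \<in> set es" using ne by auto
qed

lemma nth_comb:
  assumes "a \<le> length xs" "b \<le> length ys"
  shows "(take a xs @ drop b ys) ! i = (if i < a then xs ! i else ys ! (b + (i - a)))"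
  using assms by (auto simp: nth_append min_def)

lemma combine_path:
  assumes p1: "is_path V E I (vs1, es1)" and p2: "is_path V E I (vs2, es2)"
    and a: "a < length vs1" and b: "b < length vs2" and eq: "vs1 ! a = vs2 ! b"
    and disj: "set (take a vs1) \<inter> set (drop b vs2) = {}"
  shows "is_path V E I (take a vs1 @ drop b vs2, take a es1 @ drop b es2)"
proof -
  note P1 = path_D[OF p1] and P2 = path_D[OF p2]
  have la: "a \<le> length es1" using a P1(2) by simp
  have lb: "b \<le> length es2" using b P2(2) by simp
  have len: "length (take a es1 @ drop b es2) = length (take a vs1 @ drop b vs2) - 1"
    using la lb a b P1(2) P2(2) by simp
  have ne: "take a vs1 @ drop b vs2 \<noteq> []" using b by simp
  have dist: "distinct (take a vs1 @ drop b vs2)" using P1(3) P2(3) disj by simp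
  have sv: "set (take a vs1 @ drop b vs2) \<subseteq> V" using P1(4) P2(4) set_take_subset[of a vs1] set_drop_subset[of b vs2]
    by auto
  have se: "set (take a es1 @ drop b es2) \<subseteq> E" using P1(5) P2(5) set_take_subset[of a es1] set_drop_subset[of b es2]
    by auto
  have ed: "I ((take a es1 @ drop b es2) ! i) = {(take a vs1 @ drop b vs2) ! i, (take a vs1 @ drop b vs2) ! Suc i}"
    if i: "i < length (take a es1 @ drop b es2)" for i
  proof (cases "i < a")
    case True
    have e: "(take a es1 @ drop b es2) ! i = es1 ! i" using nth_comb[OF la lb] True by simp
    have v: "(take a vs1 @ drop b vs2) ! i = vs1 ! i" using nth_comb[of a vs1 b vs2] a b True by simp
    have v2: "(take a vs1 @ drop b vs2) ! Suc i = vs1 ! Suc i"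
    proof (cases "Suc i < a")
      case True thus ?thesis using nth_comb[of a vs1 b vs2] a b by simp
    next
      case False hence "Suc i = a" using \<open>i < a\<close> by simp
      thus ?thesis using nth_comb[of a vs1 b vs2] a b eq by simp
    qed
    have "i < length es1" using True la by simp
    thus ?thesis using P1(6) e v v2 by simp
  next
    case False
    have e: "(take a es1 @ drop b es2) ! i = es2 ! (b + (i - a))" using nth_comb[OF la lb] False by simp
    have v: "(take a vs1 @ drop b vs2) ! i = vs2 ! (b + (i - a))" using nth_comb[of a vs1 b vs2] a b False by simp
    have v2: "(take a vs1 @ drop b vs2) ! Suc i = vs2 ! Suc (b + (i - a))"
      using nth_comb[of a vs1 b vs2] a b False by (simp add: Suc_diff_le)
    have "b + (i - a) < length es2" using i la lb False by simp
    thus ?thesis using P2(6) e v v2 by simp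
  qed
  show ?thesis unfolding is_path_def using ne len dist sv se ed by simp
qed

lemma combine_hd:
  assumes "a < length vs1" "b < length vs2" "vs1 ! a = vs2 ! b" "vs1 \<noteq> []"
  shows "hd (take a vs1 @ drop b vs2) = hd vs1"
  using assms by (cases "a = 0") (auto simp: hd_append hd_take hd_drop_conv_nth hd_conv_nth)

lemma combine_last:
  assumes "b < length vs2"
  shows "last (take a vs1 @ drop b vs2) = last vs2"
  using assms by simp

lemma combine_st_path:
  assumes p1: "st_path V E I s t (vs1, es1)" and p2: "st_path V E I s t (vs2, es2)"
    and a: "a < length vs1" and b: "b < length vs2" and eq: "vs1 ! a = vs2 ! b"
    and disj: "set (take a vs1) \<inter> set (drop b vs2) = {}"
  shows "st_path V E I s t (take a vs1 @ drop b vs2, take a es1 @ drop b es2)"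
proof -
  have "is_path V E I (take a vs1 @ drop b vs2, take a es1 @ drop b es2)"
    using combine_path[OF st_path_D(1)[OF p1] st_path_D(1)[OF p2] a b eq disj] .
  moreover have "hd (take a vs1 @ drop b vs2) = s"
    using combine_hd[OF a b eq] st_path_D(2)[OF p1] path_D(1)[OF st_path_D(1)[OF p1]] by simp
  moreover have "last (take a vs1 @ drop b vs2) = t" using combine_last[OF b] st_path_D(3)[OF p2] by simp
  ultimately show ?thesis unfolding st_path_def by simp
qed

lemma in_take: "x \<in> set (take n xs) \<Longrightarrow> \<exists>m<n. m < length xs \<and> xs ! m = x"
proof -
  assume "x \<in> set (take n xs)"
  then obtain m where "m < length (take n xs)" "take n xs ! m = x" by (auto simp: in_set_conv_nth)
  thus ?thesis by auto
qed

lemma in_drop: "x \<in> set (drop n xs) \<Longrightarrow> \<exists>m\<ge>n. m < length xs \<and> xs ! m = x"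
proof -
  assume "x \<in> set (drop n xs)"
  then obtain m where m: "m < length (drop n xs)" "drop n xs ! m = x" by (auto simp: in_set_conv_nth)
  hence "n + m < length xs" "xs ! (n + m) = x" by auto
  thus ?thesis by (intro exI[of _ "n + m"]) auto
qed

lemma nd_drop: "distinct xs \<Longrightarrow> m < k \<Longrightarrow> m < length xs \<Longrightarrow> xs ! m \<notin> set (drop k xs)"
  by (metis in_drop nth_eq_iff_index_eq not_le)

lemma nd_take: "distinct xs \<Longrightarrow> n \<le> m \<Longrightarrow> m < length xs \<Longrightarrow> xs ! m \<notin> set (take n xs)"
  by (metis in_take nth_eq_iff_index_eq not_le)

lemma drop_mono_set: "k1 \<le> k2 \<Longrightarrow> set (drop k2 xs) \<subseteq> set (drop k1 xs)"
  by (simp add: set_drop_subset_set_drop)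

definition used_dir :: "('v list \<times> 'e list) set \<Rightarrow> 'e \<Rightarrow> 'v \<Rightarrow> 'v \<Rightarrow> bool" where
  "used_dir B e x y \<longleftrightarrow> (\<exists>q\<in>B. \<exists>j < length (snd q). snd q ! j = e \<and> fst q ! j = x \<and> fst q ! Suc j = y)"

definition residual :: "('v list \<times> 'e list) set \<Rightarrow> 'v list \<times> 'e list \<Rightarrow> bool" where
  "residual B W \<longleftrightarrow> (\<forall>i < length (snd W). snd W ! i \<notin> sys_edges B \<or>
      used_dir B (snd W ! i) (fst W ! Suc i) (fst W ! i))"

lemma sys_edgesI: "q \<in> B \<Longrightarrow> e \<in> set (snd q) \<Longrightarrow> e \<in> sys_edges B"
  by (auto simp: sys_edges_def path_edges_def)

lemma sys_edgesE: "e \<in> sys_edges B \<Longrightarrow> (\<And>q. q \<in> B \<Longrightarrow> e \<in> set (snd q) \<Longrightarrow> P) \<Longrightarrow> P"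
  by (auto simp: sys_edges_def path_edges_def)

lemma edsD:
  assumes "edge_disjoint_st_system V E I s t B"
  shows "\<And>p. p \<in> B \<Longrightarrow> st_path V E I s t p"
    "\<And>p q e. p \<in> B \<Longrightarrow> q \<in> B \<Longrightarrow> e \<in> set (snd p) \<Longrightarrow> e \<in> set (snd q) \<Longrightarrow> p = q"
  using assms unfolding edge_disjoint_st_system_def path_edges_def by blast+

lemma nth_in_drop: "n < length xs \<Longrightarrow> xs ! n \<in> set (drop n xs)"
  by (metis Cons_nth_drop_Suc list.set_intros(1))

lemma augment_step:
  assumes st: "s \<noteq> t"
    and B: "edge_disjoint_st_system V E I s t B"
    and Wp: "st_path V E I s t (ws, wes)"
    and R: "residual B (ws, wes)"
    and hdW: "hd wes \<notin> sys_edges B" and lastW: "last wes \<notin> sys_edges B"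
    and used: "set wes \<inter> sys_edges B \<noteq> {}"
  shows "\<exists>B'' W''. edge_disjoint_st_system V E I s t B'' \<and> st_path V E I s t W'' \<and> residual B'' W''
     \<and> hd (snd W'') \<notin> sys_edges B'' \<and> last (snd W'') \<notin> sys_edges B''
     \<and> card (set (snd W'') \<inter> sys_edges B'') < card (set wes \<inter> sys_edges B)
     \<and> insert (first_e W'') (first_e ` B'') = insert (first_e (ws, wes)) (first_e ` B)
     \<and> insert (last_e W'') (last_e ` B'') = insert (last_e (ws, wes)) (last_e ` B)"
proof -
  note WP = path_D[OF st_path_D(1)[OF Wp]]
  have wdist: "distinct wes" using path_distinct_edges[OF st_path_D(1)[OF Wp]] .
  have wne: "wes \<noteq> []" using st_path_len[OF Wp st] by simp
  have ws0: "ws ! 0 = s" using st_path_hd[OF Wp] .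
  have wslast: "ws ! (length wes) = t" using st_path_last[OF Wp] WP(2) wne by (cases ws) auto
  have lws: "length ws = Suc (length wes)" using WP(2) wne by (cases ws) auto
  have wsnt: "ws ! m \<noteq> t" if "m < length wes" for m
    using nth_eq_iff_index_eq[OF WP(3), of m "length wes"] that lws wslast by auto
  define i where "i = (LEAST i. i < length wes \<and> wes ! i \<in> sys_edges B)"
  have exi: "\<exists>i. i < length wes \<and> wes ! i \<in> sys_edges B" using used by (auto simp: in_set_conv_nth)
  have i1: "i < length wes" "wes ! i \<in> sys_edges B" using LeastI_ex[OF exi] unfolding i_def by auto
  have i2: "wes ! m \<notin> sys_edges B" if "m < i" for m
    using not_less_Least[of m "\<lambda>i. i < length wes \<and> wes ! i \<in> sys_edges B"] that i1(1) unfolding i_def by auto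
  have i0: "0 < i" using i1 hdW wne by (cases "i = 0") (auto simp: hd_conv_nth)
  have ilast: "Suc i < length wes"
  proof (rule ccontr)
    assume "\<not> Suc i < length wes" hence "i = length wes - 1" using i1 by simp
    thus False using i1 lastW wne by (simp add: last_conv_nth)
  qed
  have "used_dir B (wes ! i) (ws ! Suc i) (ws ! i)" using R i1 unfolding residual_def by auto
  then obtain q j where q: "q \<in> B" "j < length (snd q)" "snd q ! j = wes ! i"
    "fst q ! j = ws ! Suc i" "fst q ! Suc j = ws ! i" unfolding used_dir_def by blast
  obtain vsq esq where qq: "q = (vsq, esq)" by fastforce
  have Qp: "st_path V E I s t (vsq, esq)" using edsD(1)[OF B q(1)] qq by simp
  note QP = path_D[OF st_path_D(1)[OF Qp]]
  have qdist: "distinct esq" using path_distinct_edges[OF st_path_D(1)[OF Qp]] .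
  have qne: "esq \<noteq> []" using st_path_len[OF Qp st] by simp
  have lvq: "length vsq = Suc (length esq)" using QP(2) QP(1) by (cases vsq) auto
  have vq0: "vsq ! 0 = s" using st_path_hd[OF Qp] .
  have vqlast: "vsq ! (length esq) = t" using st_path_last[OF Qp] lvq by simp
  have vqnt: "vsq ! m \<noteq> t" if "m < length esq" for m
    using nth_eq_iff_index_eq[OF QP(3), of m "length esq"] that lvq vqlast by auto
  have j: "j < length esq" "esq ! j = wes ! i" "vsq ! j = ws ! Suc i" "vsq ! Suc j = ws ! i"
    using q qq by auto
  have Eq: "set esq \<subseteq> sys_edges B" using q(1) qq sys_edgesI by fastforce
  define i' where "i' = (LEAST k. ws ! k \<in> set (drop (Suc j) vsq))"
  have exi': "ws ! i \<in> set (drop (Suc j) vsq)" using nth_in_drop[of "Suc j" vsq] j(4) j(1) lvq by simp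
  have i'1: "ws ! i' \<in> set (drop (Suc j) vsq)" using LeastI[of "\<lambda>k. ws ! k \<in> set (drop (Suc j) vsq)", OF exi']
    unfolding i'_def .
  have i'le: "i' \<le> i" using Least_le[of "\<lambda>k. ws ! k \<in> set (drop (Suc j) vsq)", OF exi'] unfolding i'_def .
  have i'2: "ws ! m \<notin> set (drop (Suc j) vsq)" if "m < i'" for m
    using not_less_Least[of m "\<lambda>k. ws ! k \<in> set (drop (Suc j) vsq)"] that unfolding i'_def by auto
  have i'0: "0 < i'"
  proof (rule ccontr)
    assume "\<not> 0 < i'" hence "i' = 0" by simp
    hence "vsq ! 0 \<in> set (drop (Suc j) vsq)" using i'1 ws0 vq0 by simp
    thus False using nd_drop[OF QP(3), of 0 "Suc j"] lvq by simp
  qed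
  obtain k where k: "Suc j \<le> k" "k < length vsq" "vsq ! k = ws ! i'" using in_drop[OF i'1] by blast
  have klt: "k < length esq"
  proof (rule ccontr)
    assume "\<not> k < length esq" hence "k = length esq" using k lvq by simp
    hence "ws ! i' = t" using k vqlast by simp
    thus False using wsnt[of i'] i'le i1 by simp
  qed
  define q' where "q' = (take i' ws @ drop k vsq, take i' wes @ drop k esq)"
  have disj1: "set (take i' ws) \<inter> set (drop k vsq) = {}"
  proof (rule ccontr)
    assume "set (take i' ws) \<inter> set (drop k vsq) \<noteq> {}"
    then obtain x where x: "x \<in> set (take i' ws)" "x \<in> set (drop k vsq)" by blast
    obtain m where m: "m < i'" "ws ! m = x" using in_take[OF x(1)] by blast
    have "x \<in> set (drop (Suc j) vsq)" using drop_mono_set[OF k(1), of vsq] x(2) by blast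
    thus False using i'2[OF m(1)] m(2) by simp
  qed
  have i'lw: "i' < length ws" using i'le i1 lws by simp
  have q'p: "st_path V E I s t q'" unfolding q'_def
    using combine_st_path[OF Wp Qp i'lw k(2) k(3)[symmetric] disj1] .
  have q'e: "set (snd q') = set (take i' wes) \<union> set (drop k esq)" unfolding q'_def by simp
  have F1: "e \<notin> sys_edges B" if "e \<in> set (take i' wes)" for e
    using in_take[OF that] i2 i'le by fastforce
  have fq': "first_e q' = hd wes" unfolding q'_def first_e_def using i'0 wne i'le i1
    by (simp add: hd_append hd_take)
  have lq': "last_e q' = last esq" unfolding q'_def last_e_def using klt by simp
  define j' where "j' = (LEAST m. vsq ! m \<in> set (drop (Suc i) ws))"
  have exj': "vsq ! j \<in> set (drop (Suc i) ws)" using nth_in_drop[of "Suc i" ws] j(3) ilast lws by simp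
  have j'1: "vsq ! j' \<in> set (drop (Suc i) ws)" using LeastI[of "\<lambda>m. vsq ! m \<in> set (drop (Suc i) ws)", OF exj']
    unfolding j'_def .
  have j'le: "j' \<le> j" using Least_le[of "\<lambda>m. vsq ! m \<in> set (drop (Suc i) ws)", OF exj'] unfolding j'_def .
  have j'2: "vsq ! m \<notin> set (drop (Suc i) ws)" if "m < j'" for m
    using not_less_Least[of m "\<lambda>m. vsq ! m \<in> set (drop (Suc i) ws)"] that unfolding j'_def by auto
  have j'0: "0 < j'"
  proof (rule ccontr)
    assume "\<not> 0 < j'" hence "j' = 0" by simp
    hence "ws ! 0 \<in> set (drop (Suc i) ws)" using j'1 ws0 vq0 by simp
    thus False using nd_drop[OF WP(3), of 0 "Suc i"] lws by simp
  qed
  obtain p where p: "Suc i \<le> p" "p < length ws" "ws ! p = vsq ! j'" using in_drop[OF j'1] by blast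
  have plt: "p < length wes"
  proof (rule ccontr)
    assume "\<not> p < length wes" hence "p = length wes" using p lws by simp
    hence "vsq ! j' = t" using p wslast by simp
    thus False using vqnt[of j'] j'le j by simp
  qed
  define W'' where "W'' = (take j' vsq @ drop p ws, take j' esq @ drop p wes)"
  have disj2: "set (take j' vsq) \<inter> set (drop p ws) = {}"
  proof (rule ccontr)
    assume "set (take j' vsq) \<inter> set (drop p ws) \<noteq> {}"
    then obtain x where x: "x \<in> set (take j' vsq)" "x \<in> set (drop p ws)" by blast
    obtain m where m: "m < j'" "vsq ! m = x" using in_take[OF x(1)] by blast
    have "x \<in> set (drop (Suc i) ws)" using drop_mono_set[OF p(1), of ws] x(2) by blast
    thus False using j'2[OF m(1)] m(2) by simp
  qed
  have j'lq: "j' < length vsq" using j'le j lvq by simp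
  have W''p: "st_path V E I s t W''" unfolding W''_def
    using combine_st_path[OF Qp Wp j'lq p(2) p(3)[symmetric] disj2] .
  have fW'': "first_e W'' = hd esq" unfolding W''_def first_e_def using j'0 qne j'le j
    by (simp add: hd_append hd_take)
  have lW'': "last_e W'' = last wes" unfolding W''_def last_e_def using plt by simp
  define B'' where "B'' = insert q' (B - {q})"
  have EB'': "e \<in> sys_edges B''" if "e \<in> set (snd q') \<or> (\<exists>r\<in>B. r \<noteq> q \<and> e \<in> set (snd r))" for e
    using that unfolding B''_def by (auto intro: sys_edgesI)
  have EB''D: "e \<in> set (snd q') \<or> (\<exists>r\<in>B. r \<noteq> q \<and> e \<in> set (snd r))" if "e \<in> sys_edges B''" for e
    using that unfolding B''_def by (auto elim!: sys_edgesE)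
  have notq: "e \<notin> set (snd r)" if "e \<in> set esq" "r \<in> B" "r \<noteq> q" for e r
    using edsD(2)[OF B q(1) that(2), of e] that qq by auto
  have B''ok: "edge_disjoint_st_system V E I s t B''"
    unfolding edge_disjoint_st_system_def path_edges_def
  proof (intro conjI ballI impI)
    fix r assume "r \<in> B''" hence "r = q' \<or> r \<in> B" unfolding B''_def by blast
    thus "st_path V E I s t r" using q'p edsD(1)[OF B, of r] by blast
  next
    fix r1 r2 assume r: "r1 \<in> B''" "r2 \<in> B''" "r1 \<noteq> r2"
    have aux: "set (snd q') \<inter> set (snd r) = {}" if "r \<in> B" "r \<noteq> q" for r
    proof -
      { fix e assume e: "e \<in> set (snd q')" "e \<in> set (snd r)"
        have eB: "e \<in> sys_edges B" using sys_edgesI[OF that(1) e(2)] .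
        have "e \<notin> set (take i' wes)" using F1 eB by blast
        hence "e \<in> set (drop k esq)" using e(1) q'e by blast
        hence "e \<in> set esq" by (rule in_set_dropD)
        hence False using notq[OF _ that] e(2) by blast }
      thus ?thesis by blast
    qed
    show "set (snd r1) \<inter> set (snd r2) = {}"
    proof (cases "r1 = q'")
      case True
      hence "r2 \<in> B" "r2 \<noteq> q" using r unfolding B''_def by auto
      thus ?thesis using aux True by blast
    next
      case False
      hence r1B: "r1 \<in> B" "r1 \<noteq> q" using r unfolding B''_def by auto
      show ?thesis
      proof (cases "r2 = q'")
        case True thus ?thesis using aux[OF r1B] by blast
      next
        case False
        hence "r2 \<in> B" using r unfolding B''_def by auto
        thus ?thesis using edsD(2)[OF B r1B(1)] r(3) by blast
      qed
    qed
  qed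
  have qpref: "esq ! m \<notin> sys_edges B''" if "m < k" "m < length esq" for m
  proof
    assume a: "esq ! m \<in> sys_edges B''"
    have m_in: "esq ! m \<in> set esq" using that by simp
    have d: "esq ! m \<in> set (snd q') \<or> (\<exists>r\<in>B. r \<noteq> q \<and> esq ! m \<in> set (snd r))" using EB''D[OF a] .
    have "\<not> (\<exists>r\<in>B. r \<noteq> q \<and> esq ! m \<in> set (snd r))" using notq[OF m_in] by blast
    hence in_q': "esq ! m \<in> set (snd q')" using d by blast
    have mB: "esq ! m \<in> sys_edges B" using subsetD[OF Eq m_in] .
    have nt: "esq ! m \<notin> set (take i' wes)" using F1 mB by metis
    have nd: "esq ! m \<notin> set (drop k esq)" using nd_drop[OF qdist that(1) that(2)] .
    show False using in_q' nt nd q'e by simp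
  qed
  have wtail: "wes ! n \<in> sys_edges B" if "wes ! n \<in> sys_edges B''" "i < n" "n < length wes" for n
  proof -
    have d: "wes ! n \<in> set (snd q') \<or> (\<exists>r\<in>B. r \<noteq> q \<and> wes ! n \<in> set (snd r))" using EB''D[OF that(1)] .
    have nt: "wes ! n \<notin> set (take i' wes)" using nd_take[OF wdist _ that(3)] that(2) i'le by simp
    show ?thesis
    proof (cases "wes ! n \<in> set (snd q')")
      case True
      hence "wes ! n \<in> set (drop k esq)" using nt q'e by simp
      hence "wes ! n \<in> set esq" by (rule in_set_dropD)
      thus ?thesis using Eq by blast
    next
      case False
      then obtain r where "r \<in> B" "wes ! n \<in> set (snd r)" using d by blast
      thus ?thesis by (rule sys_edgesI)
    qed
  qed
  have hdW'': "hd (snd W'') \<notin> sys_edges B''" using fW'' qpref[of 0] qne k(1) unfolding first_e_def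
    by (simp add: hd_conv_nth)
  have lastW'': "last (snd W'') \<notin> sys_edges B''"
  proof
    assume a: "last (snd W'') \<in> sys_edges B''"
    have "last (snd W'') = wes ! (length wes - 1)" using lW'' wne unfolding last_e_def by (simp add: last_conv_nth)
    moreover have "i < length wes - 1" using ilast by simp
    ultimately have "wes ! (length wes - 1) \<in> sys_edges B" using wtail[of "length wes - 1"] a wne by simp
    thus False using lastW wne by (simp add: last_conv_nth)
  qed
  have nthW'e: "snd W'' ! m = (if m < j' then esq ! m else wes ! (p + (m - j')))" for m
    unfolding W''_def using nth_comb[of j' esq p wes m] j'le j plt by simp
  have nthW'v: "fst W'' ! m = (if m < j' then vsq ! m else ws ! (p + (m - j')))" for m
    unfolding W''_def using nth_comb[of j' vsq p ws m] j'lq p(2) by simp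
  have lenW'': "length (snd W'') = j' + (length wes - p)" unfolding W''_def using j'le j by simp
  have resW'': "residual B'' W''" unfolding residual_def
  proof (intro allI impI)
    fix m assume m: "m < length (snd W'')"
    show "snd W'' ! m \<notin> sys_edges B'' \<or> used_dir B'' (snd W'' ! m) (fst W'' ! Suc m) (fst W'' ! m)"
    proof (cases "m < j'")
      case True
      thus ?thesis using nthW'e qpref[of m] j'le j k(1) by simp
    next
      case False
      define n where "n = p + (m - j')"
      have n: "n < length wes" "i < n" using m lenW'' False p(1) unfolding n_def by auto
      have e: "snd W'' ! m = wes ! n" using nthW'e False unfolding n_def by simp
      have v1: "fst W'' ! m = ws ! n" using nthW'v False unfolding n_def by simp
      have v2: "fst W'' ! Suc m = ws ! Suc n" using nthW'v False unfolding n_def by (simp add: Suc_diff_le)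
      have ntake: "wes ! n \<notin> set (take i' wes)" using nd_take[OF wdist _ n(1)] n(2) i'le by simp
      have "wes ! n \<notin> sys_edges B \<or> used_dir B (wes ! n) (ws ! Suc n) (ws ! n)"
        using R n(1) unfolding residual_def by simp
      thus ?thesis
      proof
        assume "wes ! n \<notin> sys_edges B"
        thus ?thesis using wtail n e by auto
      next
        assume "used_dir B (wes ! n) (ws ! Suc n) (ws ! n)"
        then obtain r l where r: "r \<in> B" "l < length (snd r)" "snd r ! l = wes ! n"
          "fst r ! l = ws ! Suc n" "fst r ! Suc l = ws ! n" unfolding used_dir_def by blast
        show ?thesis
        proof (cases "r = q")
          case False
          hence "r \<in> B''" using r(1) unfolding B''_def by simp
          hence "used_dir B'' (wes ! n) (ws ! Suc n) (ws ! n)" using r unfolding used_dir_def by blast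
          thus ?thesis using e v1 v2 by simp
        next
          case True
          have l: "l < length esq" "esq ! l = wes ! n" "vsq ! l = ws ! Suc n" "vsq ! Suc l = ws ! n"
            using r True qq by auto
          show ?thesis
          proof (cases "k \<le> l")
            case True
            define d where "d = l - k"
            have ld: "l = k + d" using True unfolding d_def by simp
            define z where "z = i' + d"
            have ze: "snd q' ! z = esq ! l" unfolding q'_def z_def
              using nth_comb[of i' wes k esq "i' + d"] i'le i1 klt ld by simp
            have zv1: "fst q' ! z = vsq ! l" unfolding q'_def z_def
              using nth_comb[of i' ws k vsq "i' + d"] i'lw k(2) ld by simp
            have zv2: "fst q' ! Suc z = vsq ! Suc l" unfolding q'_def z_def
              using nth_comb[of i' ws k vsq "Suc (i' + d)"] i'lw k(2) ld by simp
            have zl: "z < length (snd q')" unfolding q'_def z_def using i'le i1 klt l(1) ld by simp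
            have "q' \<in> B''" unfolding B''_def by simp
            hence "used_dir B'' (wes ! n) (ws ! Suc n) (ws ! n)" unfolding used_dir_def
              using ze zv1 zv2 zl l by metis
            thus ?thesis using e v1 v2 by simp
          next
            case False
            have "esq ! l \<notin> sys_edges B''" using qpref[of l] False l(1) by simp
            thus ?thesis using e l(2) by simp
          qed
        qed
      qed
    qed
  qed
  have sub: "set (snd W'') \<inter> sys_edges B'' \<subseteq> (set wes \<inter> sys_edges B) - {wes ! i}"
  proof
    fix e assume e: "e \<in> set (snd W'') \<inter> sys_edges B''"
    then obtain m where m: "m < length (snd W'')" "snd W'' ! m = e" by (auto simp: in_set_conv_nth)
    show "e \<in> (set wes \<inter> sys_edges B) - {wes ! i}"
    proof (cases "m < j'")
      case True
      thus ?thesis using nthW'e[of m] m qpref[of m] e j'le j k(1) by auto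
    next
      case False
      define n where "n = p + (m - j')"
      have n: "n < length wes" "i < n" using m lenW'' False p(1) unfolding n_def by auto
      have en: "e = wes ! n" using nthW'e[of m] m False unfolding n_def by simp
      have "wes ! n \<noteq> wes ! i" using nth_eq_iff_index_eq[OF wdist n(1) i1(1)] n(2) by simp
      moreover have "e \<in> sys_edges B" using wtail[of n] n e en by simp
      moreover have "e \<in> set wes" using en n(1) by simp
      ultimately show ?thesis using en by simp
    qed
  qed
  have "card (set (snd W'') \<inter> sys_edges B'') \<le> card ((set wes \<inter> sys_edges B) - {wes ! i})"
    using card_mono[OF _ sub] by simp
  also have "\<dots> < card (set wes \<inter> sys_edges B)"
    using i1 by (intro card_Diff1_less) auto
  finally have lt: "card (set (snd W'') \<inter> sys_edges B'') < card (set wes \<inter> sys_edges B)" .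
  have fe: "insert (first_e W'') (first_e ` B'') = insert (first_e (ws, wes)) (first_e ` B)"
  proof -
    have A: "first_e ` B'' = insert (first_e q') (first_e ` (B - {q}))" unfolding B''_def by simp
    have Bq: "first_e ` B = insert (first_e q) (first_e ` (B - {q}))" using q(1) by blast
    have c1: "first_e q = first_e W''" using qq fW'' unfolding first_e_def by simp
    have c2: "first_e q' = first_e (ws, wes)" using fq' unfolding first_e_def by simp
    show ?thesis unfolding A Bq c1 c2 by (simp add: insert_commute)
  qed
  have le: "insert (last_e W'') (last_e ` B'') = insert (last_e (ws, wes)) (last_e ` B)"
  proof -
    have A: "last_e ` B'' = insert (last_e q') (last_e ` (B - {q}))" unfolding B''_def by simp
    have Bq: "last_e ` B = insert (last_e q) (last_e ` (B - {q}))" using q(1) by blast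
    have c1: "last_e q' = last_e q" using qq lq' unfolding last_e_def by simp
    have c2: "last_e W'' = last_e (ws, wes)" using lW'' unfolding last_e_def by simp
    show ?thesis unfolding A Bq c1 c2 by (simp add: insert_commute)
  qed
  show ?thesis using B''ok W''p resW'' hdW'' lastW'' lt fe le by blast
qed

lemma augment:
  assumes st: "s \<noteq> t"
  shows "card (set (snd W) \<inter> sys_edges B) = n \<Longrightarrow> edge_disjoint_st_system V E I s t B \<Longrightarrow>
    st_path V E I s t W \<Longrightarrow> residual B W \<Longrightarrow> hd (snd W) \<notin> sys_edges B \<Longrightarrow> last (snd W) \<notin> sys_edges B \<Longrightarrow>
    \<exists>B'. edge_disjoint_st_system V E I s t B' \<and> first_e ` B' = insert (first_e W) (first_e ` B)
       \<and> last_e ` B' = insert (last_e W) (last_e ` B)"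
proof (induction n arbitrary: B W rule: less_induct)
  case (less n B W)
  obtain ws wes where W: "W = (ws, wes)" by fastforce
  show ?case
  proof (cases "set wes \<inter> sys_edges B = {}")
    case True
    have "edge_disjoint_st_system V E I s t (insert W B)"
      unfolding edge_disjoint_st_system_def
    proof (intro conjI ballI impI)
      fix p assume "p \<in> insert W B" hence "p = W \<or> p \<in> B" by blast
      thus "st_path V E I s t p" using less.prems(3) edsD(1)[OF less.prems(2), of p] by blast
    next
      fix p q assume pq: "p \<in> insert W B" "q \<in> insert W B" "p \<noteq> q"
      have aux: "path_edges W \<inter> path_edges r = {}" if "r \<in> B" for r
      proof -
        have "path_edges r \<subseteq> sys_edges B" using that unfolding sys_edges_def by blast
        thus ?thesis using True W unfolding path_edges_def by auto
      qed
      show "path_edges p \<inter> path_edges q = {}"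
      proof (cases "p = W")
        case True
        hence "q \<in> B" using pq by blast
        thus ?thesis using aux True by blast
      next
        case False
        hence pB: "p \<in> B" using pq by blast
        show ?thesis
        proof (cases "q = W")
          case True thus ?thesis using aux[OF pB] by blast
        next
          case False
          hence "q \<in> B" using pq by blast
          thus ?thesis using less.prems(2) pB pq(3) unfolding edge_disjoint_st_system_def by blast
        qed
      qed
    qed
    thus ?thesis by (intro exI[of _ "insert W B"]) simp
  next
    case False
    obtain B'' W'' where H: "edge_disjoint_st_system V E I s t B''" "st_path V E I s t W''" "residual B'' W''"
      "hd (snd W'') \<notin> sys_edges B''" "last (snd W'') \<notin> sys_edges B''"
      "card (set (snd W'') \<inter> sys_edges B'') < card (set wes \<inter> sys_edges B)"
      "insert (first_e W'') (first_e ` B'') = insert (first_e (ws, wes)) (first_e ` B)"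
      "insert (last_e W'') (last_e ` B'') = insert (last_e (ws, wes)) (last_e ` B)"
      using augment_step[OF st less.prems(2) less.prems(3)[unfolded W] less.prems(4)[unfolded W]
          less.prems(5)[unfolded W, simplified] less.prems(6)[unfolded W, simplified] False] by blast
    have lt: "card (set (snd W'') \<inter> sys_edges B'') < n" using H(6) less.prems(1) W by simp
    obtain B' where B': "edge_disjoint_st_system V E I s t B'" "first_e ` B' = insert (first_e W'') (first_e ` B'')"
      "last_e ` B' = insert (last_e W'') (last_e ` B'')"
      using less.IH[OF lt refl H(1) H(2) H(3) H(4) H(5)] by blast
    show ?thesis using B' H(7) H(8) W by (intro exI[of _ B']) simp
  qed
qed

lemma linkage_of_first:
  assumes st: "s \<noteq> t" and R: "edge_disjoint_st_system V E I s t R" and sub: "delta E I s \<subseteq> first_e ` R"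
  shows "linkage V E I s t R"
  unfolding linkage_def links_def
proof (intro conjI R ballI)
  show "delta E I s \<subseteq> sys_edges R"
  proof
    fix e assume "e \<in> delta E I s"
    then obtain r where r: "r \<in> R" "e = first_e r" using sub by blast
    obtain vs es where "r = (vs, es)" by fastforce
    hence "e \<in> set (snd r)" using st_first_last(3)[OF _ st, of V E I vs es] edsD(1)[OF R r(1)] r(2)
      unfolding first_e_def by simp
    thus "e \<in> sys_edges R" using sys_edgesI[OF r(1)] by simp
  qed
next
  fix r assume r: "r \<in> R"
  obtain vs es where rr: "r = (vs, es)" by fastforce
  have p: "st_path V E I s t (vs, es)" using edsD(1)[OF R r] rr by simp
  have "hd es \<in> path_edges r \<inter> delta E I s" using st_first_last(1,3)[OF p st] rr unfolding path_edges_def by simp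
  thus "path_edges r \<inter> delta E I s \<noteq> {}" by blast
qed

lemma first_of_linkage:
  assumes st: "s \<noteq> t" and L: "linkage V E I s t P"
  shows "delta E I s \<subseteq> first_e ` P"
proof
  fix e assume e: "e \<in> delta E I s"
  have R: "edge_disjoint_st_system V E I s t P" using L unfolding linkage_def links_def by simp
  have "e \<in> sys_edges P" using L e unfolding linkage_def links_def by blast
  then obtain p where p: "p \<in> P" "e \<in> set (snd p)" by (rule sys_edgesE)
  obtain vs es where pp: "p = (vs, es)" by fastforce
  have "e = hd es" using st_edge_s[of V E I s t vs es e] edsD(1)[OF R p(1)] pp p(2) st e
    unfolding delta_def by simp
  hence "first_e p = e" using pp unfolding first_e_def by simp
  thus "e \<in> first_e ` P" using image_eqI[OF _ p(1), of e first_e] by simp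
qed

lemma delta_sys_last:
  assumes st: "s \<noteq> t" and R: "edge_disjoint_st_system V E I s t R"
  shows "delta_sys E I R t = last_e ` R"
proof
  show "delta_sys E I R t \<subseteq> last_e ` R"
  proof
    fix e assume "e \<in> delta_sys E I R t"
    hence e: "e \<in> delta E I t" "e \<in> sys_edges R" unfolding delta_sys_def by auto
    from e(2) obtain r where r: "r \<in> R" "e \<in> set (snd r)" by (rule sys_edgesE)
    obtain vs es where rr: "r = (vs, es)" by fastforce
    have "e = last es" using st_edge_t[of V E I s t vs es e] edsD(1)[OF R r(1)] rr r(2) st e(1)
      unfolding delta_def by simp
    hence "last_e r = e" using rr unfolding last_e_def by simp
    thus "e \<in> last_e ` R" using image_eqI[OF _ r(1), of e last_e] by simp
  qed
next
  show "last_e ` R \<subseteq> delta_sys E I R t"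
  proof
    fix e assume "e \<in> last_e ` R"
    then obtain r where r: "r \<in> R" "e = last_e r" by blast
    obtain vs es where rr: "r = (vs, es)" by fastforce
    have p: "st_path V E I s t (vs, es)" using edsD(1)[OF R r(1)] rr by simp
    have "e \<in> delta E I t" "e \<in> set (snd r)" using st_first_last(2,4)[OF p st] r(2) rr unfolding last_e_def by simp_all
    moreover have "e \<in> sys_edges R" using sys_edgesI[OF r(1)] \<open>e \<in> set (snd r)\<close> by simp
    ultimately show "e \<in> delta_sys E I R t" unfolding delta_sys_def by simp
  qed
qed

lemma beyond:
  assumes cl: "\<And>x y e. y \<in> S \<Longrightarrow> x \<noteq> t \<Longrightarrow> e \<in> E \<Longrightarrow> I e = {x, y} \<Longrightarrow>
        (e \<notin> sys_edges B \<or> used_dir B e x y) \<Longrightarrow> x \<in> S"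
    and q: "(vq, eq) \<in> B" and qp: "st_path V E I s t (vq, eq)" and j: "j < length eq"
    and y: "vq ! Suc j \<notin> S"
  shows "Suc j + d < length vq \<Longrightarrow> vq ! (Suc j + d) \<notin> S"
proof (induction d)
  case 0 thus ?case using y by simp
next
  case (Suc d)
  note QP = path_D[OF st_path_D(1)[OF qp]]
  have lvq: "length vq = Suc (length eq)" using QP(1,2) by (cases vq) auto
  define k where "k = Suc j + d"
  have k: "k < length eq" using Suc.prems lvq unfolding k_def by simp
  have IH: "vq ! k \<notin> S" using Suc.IH Suc.prems unfolding k_def by simp
  show ?case
  proof
    assume a: "vq ! (Suc j + Suc d) \<in> S"
    have xt: "vq ! k \<noteq> t"
    proof
      assume "vq ! k = t"
      moreover have "vq ! (length eq) = t" using st_path_last[OF qp] lvq by simp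
      ultimately have "k = length eq" using nth_eq_iff_index_eq[OF QP(3), of k "length eq"] k lvq by simp
      thus False using k by simp
    qed
    have e: "eq ! k \<in> E" using QP(5) k by auto
    have Ie: "I (eq ! k) = {vq ! k, vq ! Suc k}" using QP(6)[OF k] .
    have u: "used_dir B (eq ! k) (vq ! k) (vq ! Suc k)" unfolding used_dir_def
      using q k by (intro bexI[of _ "(vq, eq)"]) auto
    have "vq ! Suc k \<in> S" using a unfolding k_def by simp
    hence "vq ! k \<in> S" using cl[OF _ xt e Ie] u by blast
    thus False using IH by simp
  qed
qed

lemma cut:
  assumes st: "s \<noteq> t"
    and B: "edge_disjoint_st_system V E I s t B"
    and P: "edge_disjoint_st_system V E I s t P"
    and sS: "s \<in> S" and tS: "t \<notin> S"
    and cl: "\<And>x y e. y \<in> S \<Longrightarrow> x \<noteq> t \<Longrightarrow> e \<in> E \<Longrightarrow> I e = {x, y} \<Longrightarrow>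
        (e \<notin> sys_edges B \<or> used_dir B e x y) \<Longrightarrow> x \<in> S"
  shows "\<exists>R. edge_disjoint_st_system V E I s t R \<and> first_e ` R = first_e ` P \<and>
     (\<forall>r\<in>R. last_e r \<in> last_e ` B \<or> (last_e r \<in> sys_edges P \<and> (\<exists>x\<in>S. I (last_e r) = {x, t})))"
proof -
  define ix where "ix p = (LEAST i. fst p ! Suc i \<notin> S)" for p :: "'a list \<times> 'b list"
  have EX: "ix (vs, es) < length es \<and> vs ! Suc (ix (vs, es)) \<notin> S \<and> (\<forall>m \<le> ix (vs, es). vs ! m \<in> S)"
    if p: "(vs, es) \<in> P" for vs es
  proof -
    have pp: "st_path V E I s t (vs, es)" using edsD(1)[OF P p] .
    note PP = path_D[OF st_path_D(1)[OF pp]]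
    have ne: "es \<noteq> []" using st_path_len[OF pp st] by simp
    have lv: "length vs = Suc (length es)" using PP(1,2) by (cases vs) auto
    have vl: "vs ! Suc (length es - 1) = t" using st_path_last[OF pp] lv ne by simp
    have ex: "vs ! Suc (length es - 1) \<notin> S" using vl tS by simp
    have a: "vs ! Suc (ix (vs, es)) \<notin> S" using LeastI[of "\<lambda>i. vs ! Suc i \<notin> S", OF ex] unfolding ix_def by simp
    have b: "ix (vs, es) \<le> length es - 1" using Least_le[of "\<lambda>i. vs ! Suc i \<notin> S", OF ex] unfolding ix_def by simp
    have c: "vs ! m \<in> S" if "m \<le> ix (vs, es)" for m
    proof (cases m)
      case 0 thus ?thesis using st_path_hd[OF pp] sS by simp
    next
      case (Suc m')
      hence "m' < ix (vs, es)" using that by simp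
      thus ?thesis using not_less_Least[of m' "\<lambda>i. vs ! Suc i \<notin> S"] Suc unfolding ix_def by simp
    qed
    have "length es > 0" using ne by simp
    hence "ix (vs, es) < length es" using b by linarith
    thus ?thesis using a c by blast
  qed
  have EB: "\<exists>q j. q \<in> B \<and> j < length (snd q) \<and> snd q ! j = es ! ix (vs, es) \<and>
      fst q ! j = vs ! ix (vs, es) \<and> fst q ! Suc j = vs ! Suc (ix (vs, es))"
    if p: "(vs, es) \<in> P" and yt: "vs ! Suc (ix (vs, es)) \<noteq> t" for vs es
  proof -
    have pp: "st_path V E I s t (vs, es)" using edsD(1)[OF P p] .
    note PP = path_D[OF st_path_D(1)[OF pp]]
    note X = EX[OF p]
    define i where "i = ix (vs, es)"
    have i: "i < length es" "vs ! Suc i \<notin> S" "vs ! i \<in> S" using X unfolding i_def by auto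
    have eE: "es ! i \<in> E" using PP(5) i(1) by auto
    have Ie: "I (es ! i) = {vs ! Suc i, vs ! i}" using PP(6)[OF i(1)] by auto
    have n: "\<not> (es ! i \<notin> sys_edges B \<or> used_dir B (es ! i) (vs ! Suc i) (vs ! i))"
    proof
      assume "es ! i \<notin> sys_edges B \<or> used_dir B (es ! i) (vs ! Suc i) (vs ! i)"
      hence "vs ! Suc i \<in> S" using cl[OF i(3) yt[folded i_def] eE Ie] by blast
      thus False using i(2) by simp
    qed
    hence inB: "es ! i \<in> sys_edges B" and nu: "\<not> used_dir B (es ! i) (vs ! Suc i) (vs ! i)" by auto
    from inB obtain q where q: "q \<in> B" "es ! i \<in> set (snd q)" by (rule sys_edgesE)
    then obtain j where j: "j < length (snd q)" "snd q ! j = es ! i" by (auto simp: in_set_conv_nth)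
    obtain vq eq where qq: "q = (vq, eq)" by fastforce
    have qp: "st_path V E I s t (vq, eq)" using edsD(1)[OF B q(1)] qq by simp
    have Iq: "I (es ! i) = {vq ! j, vq ! Suc j}" using path_D(6)[OF st_path_D(1)[OF qp], of j] j qq by simp
    have "{vq ! j, vq ! Suc j} = {vs ! i, vs ! Suc i}" using Iq PP(6)[OF i(1)] by simp
    hence "(vq ! j = vs ! i \<and> vq ! Suc j = vs ! Suc i) \<or> (vq ! j = vs ! Suc i \<and> vq ! Suc j = vs ! i)"
      by (simp add: doubleton_eq_iff)
    moreover have "\<not> (vq ! j = vs ! Suc i \<and> vq ! Suc j = vs ! i)"
    proof
      assume "vq ! j = vs ! Suc i \<and> vq ! Suc j = vs ! i"
      hence "used_dir B (es ! i) (vs ! Suc i) (vs ! i)" unfolding used_dir_def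
        using q(1) qq j by (intro bexI[of _ q]) auto
      thus False using nu by simp
    qed
    ultimately have "vq ! j = vs ! i \<and> vq ! Suc j = vs ! Suc i" by blast
    thus ?thesis using q(1) j qq unfolding i_def by (intro exI[of _ q] exI[of _ j]) auto
  qed
  have "\<forall>p. \<exists>qj. p \<in> P \<and> fst p ! Suc (ix p) \<noteq> t \<longrightarrow>
      (fst qj \<in> B \<and> snd qj < length (snd (fst qj)) \<and> snd (fst qj) ! snd qj = snd p ! ix p \<and>
      fst (fst qj) ! snd qj = fst p ! ix p \<and> fst (fst qj) ! Suc (snd qj) = fst p ! Suc (ix p))"
  proof
    fix p :: "'a list \<times> 'b list"
    obtain vs es where pp: "p = (vs, es)" by fastforce
    show "\<exists>qj. p \<in> P \<and> fst p ! Suc (ix p) \<noteq> t \<longrightarrow>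
      (fst qj \<in> B \<and> snd qj < length (snd (fst qj)) \<and> snd (fst qj) ! snd qj = snd p ! ix p \<and>
      fst (fst qj) ! snd qj = fst p ! ix p \<and> fst (fst qj) ! Suc (snd qj) = fst p ! Suc (ix p))"
    proof (cases "p \<in> P \<and> fst p ! Suc (ix p) \<noteq> t")
      case True
      then obtain q j where "q \<in> B \<and> j < length (snd q) \<and> snd q ! j = es ! ix (vs, es) \<and>
        fst q ! j = vs ! ix (vs, es) \<and> fst q ! Suc j = vs ! Suc (ix (vs, es))" using EB[of vs es] pp by auto
      thus ?thesis using pp by (intro exI[of _ "(q, j)"]) simp
    next
      case False thus ?thesis by blast
    qed
  qed
  then obtain QJ where QJ: "\<And>p. p \<in> P \<Longrightarrow> fst p ! Suc (ix p) \<noteq> t \<Longrightarrow>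
      (fst (QJ p) \<in> B \<and> snd (QJ p) < length (snd (fst (QJ p))) \<and> snd (fst (QJ p)) ! snd (QJ p) = snd p ! ix p \<and>
      fst (fst (QJ p)) ! snd (QJ p) = fst p ! ix p \<and> fst (fst (QJ p)) ! Suc (snd (QJ p)) = fst p ! Suc (ix p))"
    by metis
  define qf where "qf p = fst (QJ p)" for p
  define jf where "jf p = snd (QJ p)" for p
  define F where "F p = (if fst p ! Suc (ix p) = t then p else
      (take (ix p) (fst p) @ drop (jf p) (fst (qf p)), take (ix p) (snd p) @ drop (jf p) (snd (qf p))))" for p
  define In where "In p = set (take (ix p) (snd p))" for p
  define Xe where "Xe p = snd p ! ix p" for p
  define Out where "Out p = (if fst p ! Suc (ix p) = t then {} else set (drop (Suc (jf p)) (snd (qf p))))" for p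
  have QF: "qf p \<in> B \<and> st_path V E I s t (qf p) \<and> jf p < length (snd (qf p)) \<and> snd (qf p) ! jf p = Xe p \<and>
      fst (qf p) ! jf p = fst p ! ix p \<and> fst (qf p) ! Suc (jf p) = fst p ! Suc (ix p) \<and>
      (\<forall>m. Suc (jf p) \<le> m \<longrightarrow> m < length (fst (qf p)) \<longrightarrow> fst (qf p) ! m \<notin> S)"
    if p: "p \<in> P" and yt: "fst p ! Suc (ix p) \<noteq> t" for p
  proof -
    obtain vs es where pp: "p = (vs, es)" by fastforce
    obtain vq eq where qq: "qf p = (vq, eq)" by fastforce
    have A: "qf p \<in> B" "jf p < length (snd (qf p))" "snd (qf p) ! jf p = snd p ! ix p"
      "fst (qf p) ! jf p = fst p ! ix p" "fst (qf p) ! Suc (jf p) = fst p ! Suc (ix p)"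
      using QJ[OF p yt] unfolding qf_def jf_def by auto
    have qp: "st_path V E I s t (vq, eq)" using edsD(1)[OF B A(1)] qq by simp
    have y: "vq ! Suc (jf p) \<notin> S" using A(5) EX[of vs es] p pp qq by simp
    have bey: "vq ! m \<notin> S" if m1: "Suc (jf p) \<le> m" and m2: "m < length vq" for m
    proof -
      obtain d where d: "m = Suc (jf p) + d" using m1 le_Suc_ex by blast
      have jl: "jf p < length eq" using A(2) qq by simp
      show ?thesis using beyond[OF cl A(1)[unfolded qq] qp jl y, where d=d] m2 d by simp
    qed
    have bey': "\<forall>m. Suc (jf p) \<le> m \<longrightarrow> m < length (fst (qf p)) \<longrightarrow> fst (qf p) ! m \<notin> S"
      using bey qq by simp
    show ?thesis unfolding Xe_def using A(1-5) qp[folded qq] bey' by blast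
  qed
  have PF: "st_path V E I s t (F p) \<and> set (snd (F p)) \<subseteq> In p \<union> {Xe p} \<union> Out p \<and>
      In p \<subseteq> set (snd p) \<and> Xe p \<in> set (snd p) \<and>
      (\<forall>e\<in>In p. I e \<subseteq> S \<and> I e \<noteq> {}) \<and> (I (Xe p) \<inter> S \<noteq> {} \<and> \<not> I (Xe p) \<subseteq> S) \<and>
      (\<forall>e\<in>Out p. I e \<inter> S = {} \<and> I e \<noteq> {}) \<and> first_e (F p) = first_e p \<and>
      (last_e (F p) \<in> last_e ` B \<or> (last_e (F p) \<in> sys_edges P \<and> (\<exists>x\<in>S. I (last_e (F p)) = {x, t})))"
    if p: "p \<in> P" for p
  proof -
    obtain vs es where pp: "p = (vs, es)" by fastforce
    have pP: "(vs, es) \<in> P" using p pp by simp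
    have ps: "st_path V E I s t (vs, es)" using edsD(1)[OF P pP] .
    note PP = path_D[OF st_path_D(1)[OF ps]]
    have ne: "es \<noteq> []" using st_path_len[OF ps st] by simp
    have lv: "length vs = Suc (length es)" using PP(1,2) by (cases vs) auto
    define i where "i = ix p"
    have i: "i < length es" "vs ! Suc i \<notin> S" "\<And>m. m \<le> i \<Longrightarrow> vs ! m \<in> S"
      using EX[OF pP] pp unfolding i_def by auto
    have InS: "I e \<subseteq> S \<and> I e \<noteq> {}" if eI: "e \<in> In p" for e
    proof -
      have "e \<in> set (take i es)" using eI pp unfolding In_def i_def by simp
      then obtain m where m: "m < i" "m < length es" "es ! m = e" using in_take[of e i es] by blast
      have "I e = {vs ! m, vs ! Suc m}" using PP(6)[OF m(2)] m(3) by simp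
      thus ?thesis using i(3)[of m] i(3)[of "Suc m"] m(1) by simp
    qed
    have XS: "I (Xe p) \<inter> S \<noteq> {} \<and> \<not> I (Xe p) \<subseteq> S"
    proof -
      have "I (Xe p) = {vs ! i, vs ! Suc i}" using PP(6)[OF i(1)] pp unfolding Xe_def i_def by simp
      thus ?thesis using i(2) i(3)[of i] by auto
    qed
    have InP: "In p \<subseteq> set (snd p)" unfolding In_def using set_take_subset by fastforce
    have XP: "Xe p \<in> set (snd p)" unfolding Xe_def using i(1) pp unfolding i_def by simp
    show ?thesis
    proof (cases "vs ! Suc i = t")
      case True
      have Fp: "F p = p" unfolding F_def using True pp i_def by simp
      have Op: "Out p = {}" unfolding Out_def using True pp i_def by simp
      have il: "Suc i = length es"
        using nth_eq_iff_index_eq[OF PP(3), of "Suc i" "length es"] True st_path_last[OF ps] lv i(1) by simp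
      have es_eq: "es = take i es @ [es ! i]" using take_Suc_conv_app_nth[OF i(1)] il by simp
      have se: "set (snd (F p)) \<subseteq> In p \<union> {Xe p} \<union> Out p"
      proof -
        have "set es = set (take i es) \<union> {es ! i}" by (subst es_eq) simp
        thus ?thesis using Fp Op pp unfolding In_def Xe_def i_def by simp
      qed
      have il2: "length es - Suc 0 = i" using il by simp
      have last: "last_e (F p) = es ! i" using Fp pp il2 ne unfolding last_e_def by (simp add: last_conv_nth)
      have Il: "I (es ! i) = {vs ! i, t}" using PP(6)[OF i(1)] True by simp
      have inP: "es ! i \<in> sys_edges P" using sys_edgesI[OF pP] i(1) by simp
      have "last_e (F p) \<in> sys_edges P \<and> (\<exists>x\<in>S. I (last_e (F p)) = {x, t})"
        using last Il inP i(3)[of i] by auto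
      thus ?thesis using Fp ps pp se InS XS Op InP XP by simp
    next
      case False
      have yt: "fst p ! Suc (ix p) \<noteq> t" using False pp unfolding i_def by simp
      obtain vq eq where qq: "qf p = (vq, eq)" by fastforce
      define j where "j = jf p"
      have Q: "qf p \<in> B" "st_path V E I s t (vq, eq)" "j < length eq" "eq ! j = es ! i"
        "vq ! j = vs ! i" "\<And>m. Suc j \<le> m \<Longrightarrow> m < length vq \<Longrightarrow> vq ! m \<notin> S"
        using QF[OF p yt] qq pp unfolding j_def i_def Xe_def by auto
      note QP = path_D[OF st_path_D(1)[OF Q(2)]]
      have lvq: "length vq = Suc (length eq)" using QP(1,2) by (cases vq) auto
      have Fp: "F p = (take i vs @ drop j vq, take i es @ drop j eq)"
        unfolding F_def using False pp qq unfolding i_def j_def by simp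
      have Op: "Out p = set (drop (Suc j) eq)" unfolding Out_def using False pp qq unfolding i_def j_def by simp
      have disj: "set (take i vs) \<inter> set (drop j vq) = {}"
      proof (rule ccontr)
        assume "set (take i vs) \<inter> set (drop j vq) \<noteq> {}"
        then obtain z where z: "z \<in> set (take i vs)" "z \<in> set (drop j vq)" by blast
        obtain m where m: "m < i" "m < length vs" "vs ! m = z" using in_take[OF z(1)] by blast
        obtain m' where m': "j \<le> m'" "m' < length vq" "vq ! m' = z" using in_drop[OF z(2)] by blast
        show False
        proof (cases "m' = j")
          case True
          hence "vs ! m = vs ! i" using m m' Q(5) by simp
          hence "m = i" using nth_eq_iff_index_eq[OF PP(3), of m i] m(2) i(1) lv by simp
          thus False using m(1) by simp
        next
          case False
          hence "z \<notin> S" using Q(6)[of m'] m' by simp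
          moreover have "z \<in> S" using i(3)[of m] m by simp
          ultimately show False by simp
        qed
      qed
      have Fst: "st_path V E I s t (F p)" unfolding Fp
        using combine_st_path[OF ps Q(2), of i j] i(1) lv Q(3) lvq Q(5) disj by simp
      have dj: "drop j eq = eq ! j # drop (Suc j) eq" using Cons_nth_drop_Suc[OF Q(3)] by simp
      have se: "set (snd (F p)) \<subseteq> In p \<union> {Xe p} \<union> Out p"
        using Fp Op dj Q(4) pp unfolding In_def Xe_def i_def by auto
      have OS: "I e \<inter> S = {} \<and> I e \<noteq> {}" if eO: "e \<in> Out p" for e
      proof -
        have "e \<in> set (drop (Suc j) eq)" using eO Op by simp
        then obtain m where m: "Suc j \<le> m" "m < length eq" "eq ! m = e" using in_drop[of e "Suc j" eq] by blast
        have "I e = {vq ! m, vq ! Suc m}" using QP(6)[OF m(2)] m(3) by simp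
        thus ?thesis using Q(6)[of m] Q(6)[of "Suc m"] m lvq by auto
      qed
      have fe: "first_e (F p) = first_e p"
      proof (cases "i = 0")
        case True
        hence "first_e (F p) = eq ! j" unfolding Fp first_e_def using dj by simp
        thus ?thesis using Q(4) True ne pp unfolding first_e_def by (simp add: hd_conv_nth)
      next
        case False
        thus ?thesis unfolding Fp first_e_def using pp ne i(1) by (simp add: hd_append hd_take)
      qed
      have le: "last_e (F p) = last_e (qf p)" unfolding Fp last_e_def using qq Q(3) by simp
      have "last_e (F p) \<in> last_e ` B" using le Q(1) by simp
      thus ?thesis using Fst se InS XS OS fe InP XP by simp
    qed
  qed
  have PFst: "st_path V E I s t (F p)" if "p \<in> P" for p using PF[OF that] by blast
  have PFse: "set (snd (F p)) \<subseteq> In p \<union> {Xe p} \<union> Out p" if "p \<in> P" for p using PF[OF that] by blast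
  have PFin: "In p \<subseteq> set (snd p)" if "p \<in> P" for p using PF[OF that] by blast
  have PFx: "Xe p \<in> set (snd p)" if "p \<in> P" for p using PF[OF that] by blast
  have PFinS: "I e \<subseteq> S" "I e \<noteq> {}" if "p \<in> P" "e \<in> In p" for p e using PF[OF that(1)] that(2) by blast+
  have PFxS: "I (Xe p) \<inter> S \<noteq> {}" "\<not> I (Xe p) \<subseteq> S" if "p \<in> P" for p using PF[OF that] by blast+
  have PFoS: "I e \<inter> S = {}" "I e \<noteq> {}" if "p \<in> P" "e \<in> Out p" for p e using PF[OF that(1)] that(2) by blast+
  have PFfe: "first_e (F p) = first_e p" if "p \<in> P" for p using PF[OF that] by blast
  have PFla: "last_e (F p) \<in> last_e ` B \<or> (last_e (F p) \<in> sys_edges P \<and> (\<exists>x\<in>S. I (last_e (F p)) = {x, t}))"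
    if "p \<in> P" for p using PF[OF that] by blast
  have key: "p1 = p2" if p: "p1 \<in> P" "p2 \<in> P" and e: "e \<in> set (snd (F p1))" "e \<in> set (snd (F p2))" for p1 p2 e
  proof -
    have e1: "e \<in> In p1 \<or> e = Xe p1 \<or> e \<in> Out p1" using PFse[OF p(1)] e(1) by blast
    have e2: "e \<in> In p2 \<or> e = Xe p2 \<or> e \<in> Out p2" using PFse[OF p(2)] e(2) by blast
    have same: "p1 = p2" if "e \<in> set (snd p1)" "e \<in> set (snd p2)"
      using edsD(2)[OF P p(1) p(2) that] .
    show ?thesis
    proof (cases "e \<in> In p1")
      case True
      have c1: "I e \<subseteq> S" using PFinS(1)[OF p(1) True] .
      have c2: "I e \<noteq> {}" using PFinS(2)[OF p(1) True] .
      have n1: "e \<noteq> Xe p2" using c1 PFxS(2)[OF p(2)] by metis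
      have n2: "e \<notin> Out p2"
      proof
        assume "e \<in> Out p2" hence "I e \<inter> S = {}" using PFoS(1)[OF p(2)] by blast
        thus False using c1 c2 by blast
      qed
      have "e \<in> In p2" using e2 n1 n2 by blast
      hence "e \<in> set (snd p2)" using PFin[OF p(2)] by blast
      moreover have "e \<in> set (snd p1)" using True PFin[OF p(1)] by blast
      ultimately show ?thesis using same by blast
    next
      case False
      show ?thesis
      proof (cases "e = Xe p1")
        case True
        have n1: "e \<notin> In p2"
        proof
          assume "e \<in> In p2" hence "I e \<subseteq> S" using PFinS(1)[OF p(2)] by blast
          thus False using PFxS(2)[OF p(1)] True by simp
        qed
        have n2: "e \<notin> Out p2"
        proof
          assume "e \<in> Out p2" hence "I e \<inter> S = {}" using PFoS(1)[OF p(2)] by blast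
          thus False using PFxS(1)[OF p(1)] True by simp
        qed
        have "e = Xe p2" using e2 n1 n2 by blast
        hence "e \<in> set (snd p2)" using PFx[OF p(2)] by simp
        moreover have "e \<in> set (snd p1)" using True PFx[OF p(1)] by simp
        ultimately show ?thesis using same by blast
      next
        case False2: False
        have o1: "e \<in> Out p1" using e1 False False2 by blast
        have c1: "I e \<inter> S = {}" using PFoS(1)[OF p(1) o1] .
        have c2: "I e \<noteq> {}" using PFoS(2)[OF p(1) o1] .
        have n1: "e \<notin> In p2"
        proof
          assume "e \<in> In p2" hence "I e \<subseteq> S" using PFinS(1)[OF p(2)] by blast
          thus False using c1 c2 by blast
        qed
        have n2: "e \<noteq> Xe p2"
        proof
          assume "e = Xe p2" thus False using PFxS(1)[OF p(2)] c1 by simp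
        qed
        have o2: "e \<in> Out p2" using e2 n1 n2 by blast
        have y1: "fst p1 ! Suc (ix p1) \<noteq> t"
        proof
          assume "fst p1 ! Suc (ix p1) = t" hence "Out p1 = {}" unfolding Out_def by simp
          thus False using o1 by simp
        qed
        have y2: "fst p2 ! Suc (ix p2) \<noteq> t"
        proof
          assume "fst p2 ! Suc (ix p2) = t" hence "Out p2 = {}" unfolding Out_def by simp
          thus False using o2 by simp
        qed
        note Q1 = QF[OF p(1) y1] and Q2 = QF[OF p(2) y2]
        have "e \<in> set (drop (Suc (jf p1)) (snd (qf p1)))" using o1 y1 unfolding Out_def by simp
        hence eq1: "e \<in> set (snd (qf p1))" by (rule in_set_dropD)
        have "e \<in> set (drop (Suc (jf p2)) (snd (qf p2)))" using o2 y2 unfolding Out_def by simp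
        hence eq2: "e \<in> set (snd (qf p2))" by (rule in_set_dropD)
        have qB1: "qf p1 \<in> B" using Q1 by blast
        have qB2: "qf p2 \<in> B" using Q2 by blast
        have qe: "qf p1 = qf p2" using edsD(2)[OF B qB1 qB2 eq1 eq2] .
        obtain vq eq where qq: "qf p1 = (vq, eq)" by fastforce
        have qq2: "qf p2 = (vq, eq)" using qq qe by simp
        have st1: "st_path V E I s t (vq, eq)" using Q1 qq by simp
        have lvq: "length vq = Suc (length eq)" using path_D(1,2)[OF st_path_D(1)[OF st1]] by (cases vq) auto
        have j1: "jf p1 < length eq" using Q1 qq by simp
        have j2: "jf p2 < length eq" using Q2 qq2 by simp
        have x1: "vq ! jf p1 \<in> S"
        proof -
          obtain vs es where pp: "p1 = (vs, es)" by fastforce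
          have "vq ! jf p1 = vs ! ix p1" using Q1 qq pp by simp
          thus ?thesis using EX[of vs es] p(1) pp by simp
        qed
        have x2: "vq ! jf p2 \<in> S"
        proof -
          obtain vs es where pp: "p2 = (vs, es)" by fastforce
          have "vq ! jf p2 = vs ! ix p2" using Q2 qq2 pp by simp
          thus ?thesis using EX[of vs es] p(2) pp by simp
        qed
        have b1: "\<forall>m. Suc (jf p1) \<le> m \<longrightarrow> m < length vq \<longrightarrow> vq ! m \<notin> S" using Q1 qq by simp
        have b2: "\<forall>m. Suc (jf p2) \<le> m \<longrightarrow> m < length vq \<longrightarrow> vq ! m \<notin> S" using Q2 qq2 by simp
        have "\<not> jf p1 < jf p2"
        proof
          assume "jf p1 < jf p2"
          hence "vq ! jf p2 \<notin> S" using b1 j2 lvq by simp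
          thus False using x2 by simp
        qed
        moreover have "\<not> jf p2 < jf p1"
        proof
          assume "jf p2 < jf p1"
          hence "vq ! jf p1 \<notin> S" using b2 j1 lvq by simp
          thus False using x1 by simp
        qed
        ultimately have jj: "jf p1 = jf p2" by simp
        have "Xe p1 = eq ! jf p1" using Q1 qq by simp
        moreover have "Xe p2 = eq ! jf p2" using Q2 qq2 by simp
        ultimately have xx: "Xe p1 = Xe p2" using jj by simp
        have "Xe p1 \<in> set (snd p1)" using PFx[OF p(1)] .
        moreover have "Xe p1 \<in> set (snd p2)" using PFx[OF p(2)] xx by simp
        ultimately show ?thesis using edsD(2)[OF P p(1) p(2)] by blast
      qed
    qed
  qed
  define R where "R = F ` P"
  have Rok: "edge_disjoint_st_system V E I s t R" unfolding edge_disjoint_st_system_def R_def path_edges_def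
  proof (intro conjI ballI impI)
    fix r assume "r \<in> F ` P" thus "st_path V E I s t r" using PFst by blast
  next
    fix r1 r2 assume r: "r1 \<in> F ` P" "r2 \<in> F ` P" "r1 \<noteq> r2"
    then obtain p1 p2 where p: "p1 \<in> P" "p2 \<in> P" "r1 = F p1" "r2 = F p2" by blast
    show "set (snd r1) \<inter> set (snd r2) = {}"
    proof (rule ccontr)
      assume "set (snd r1) \<inter> set (snd r2) \<noteq> {}"
      then obtain e where "e \<in> set (snd (F p1))" "e \<in> set (snd (F p2))" using p by blast
      hence "p1 = p2" using key p by blast
      thus False using r(3) p by simp
    qed
  qed
  have fe: "first_e ` R = first_e ` P"
  proof -
    have "first_e ` R = (\<lambda>p. first_e (F p)) ` P" unfolding R_def by (simp add: image_image)
    also have "\<dots> = first_e ` P" using PFfe by (intro image_cong) auto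
    finally show ?thesis .
  qed
  have la: "\<forall>r\<in>R. last_e r \<in> last_e ` B \<or> (last_e r \<in> sys_edges P \<and> (\<exists>x\<in>S. I (last_e r) = {x, t}))"
    unfolding R_def using PFla by blast
  show ?thesis using Rok fe la by blast
qed

lemma path_prefix:
  assumes "is_path V E I (vs, es)" "k < length vs"
  shows "is_path V E I (take (Suc k) vs, take k es)"
proof -
  note P = path_D[OF assms(1)]
  have "take (Suc k) vs \<noteq> []" using assms(2) by (cases vs) auto
  moreover have "length (take k es) = length (take (Suc k) vs) - 1" using P(2) assms(2) by simp
  moreover have "distinct (take (Suc k) vs)" using P(3) by simp
  moreover have "set (take (Suc k) vs) \<subseteq> V" using P(4) set_take_subset[of "Suc k" vs] by blast
  moreover have "set (take k es) \<subseteq> E" using P(5) set_take_subset[of k es] by blast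
  moreover have "I (take k es ! i) = {take (Suc k) vs ! i, take (Suc k) vs ! Suc i}" if "i < length (take k es)" for i
    using P(6)[of i] that by simp
  ultimately show ?thesis unfolding is_path_def by simp
qed

lemma path_snoc:
  assumes "is_path V E I (vs, es)" "x \<notin> set vs" "x \<in> V" "e \<in> E" "I e = {last vs, x}"
  shows "is_path V E I (vs @ [x], es @ [e])"
proof -
  note P = path_D[OF assms(1)]
  have lv: "length vs = Suc (length es)" using P(1,2) by (cases vs) auto
  have "I ((es @ [e]) ! i) = {(vs @ [x]) ! i, (vs @ [x]) ! Suc i}" if "i < length (es @ [e])" for i
  proof (cases "i < length es")
    case True thus ?thesis using P(6)[OF True] lv by (simp add: nth_append)
  next
    case False
    hence "i = length es" using that by simp
    thus ?thesis using assms(5) lv P(1) by (simp add: nth_append last_conv_nth)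
  qed
  moreover have "vs @ [x] \<noteq> []" by simp
  moreover have "length (es @ [e]) = length (vs @ [x]) - 1" using lv by simp
  moreover have "distinct (vs @ [x])" using P(3) assms(2) by simp
  moreover have "set (vs @ [x]) \<subseteq> V" using P(4) assms(3) by simp
  moreover have "set (es @ [e]) \<subseteq> E" using P(5) assms(4) by simp
  ultimately show ?thesis unfolding is_path_def by simp
qed

lemma residual_prefix:
  assumes "residual B (vs, es)" "length vs = Suc (length es)"
  shows "residual B (take (Suc k) vs, take k es)"
  using assms unfolding residual_def by simp

lemma residual_snoc:
  assumes "residual B (vs, es)" "length vs = Suc (length es)"
    and "e \<notin> sys_edges B \<or> used_dir B e x (last vs)"
  shows "residual B (vs @ [x], es @ [e])"
  unfolding residual_def
proof (intro allI impI)
  fix i assume i: "i < length (snd (vs @ [x], es @ [e]))"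
  show "snd (vs @ [x], es @ [e]) ! i \<notin> sys_edges B \<or>
     used_dir B (snd (vs @ [x], es @ [e]) ! i) (fst (vs @ [x], es @ [e]) ! Suc i) (fst (vs @ [x], es @ [e]) ! i)"
  proof (cases "i < length es")
    case True thus ?thesis using assms(1,2) unfolding residual_def by (simp add: nth_append)
  next
    case False
    hence ie: "i = length es" using i by simp
    have "vs \<noteq> []" using assms(2) by auto
    hence "last vs = vs ! length es" using assms(2) by (simp add: last_conv_nth)
    thus ?thesis using assms(2,3) ie by (simp add: nth_append)
  qed
qed

lemma st_not_s:
  assumes "st_path V E I s t (vs, es)" "Suc j < length vs"
  shows "vs ! Suc j \<noteq> s"
proof
  assume "vs ! Suc j = s"
  hence "vs ! Suc j = vs ! 0" using st_path_hd[OF assms(1)] by simp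
  moreover have "0 < length vs" using assms(2) by linarith
  ultimately have "Suc j = 0" using nth_eq_iff_index_eq[OF path_D(3)[OF st_path_D(1)[OF assms(1)]], of "Suc j" 0] assms(2) by blast
  thus False by simp
qed

lemma eds_subset:
  assumes "edge_disjoint_st_system V E I s t B" "B' \<subseteq> B"
  shows "edge_disjoint_st_system V E I s t B'"
  using assms unfolding edge_disjoint_st_system_def by blast

lemma two_elems:
  assumes "\<not> (finite D \<and> card D \<le> 1)"
  shows "\<exists>a b. a \<in> D \<and> b \<in> D \<and> a \<noteq> b"
proof (rule ccontr)
  assume "\<not> (\<exists>a b. a \<in> D \<and> b \<in> D \<and> a \<noteq> b)"
  hence all: "\<forall>a\<in>D. \<forall>b\<in>D. a = b" by blast
  show False
  proof (cases "D = {}")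
    case True thus False using assms by simp
  next
    case False
    then obtain a where "a \<in> D" by blast
    hence "D = {a}" using all by blast
    thus False using assms by simp
  qed
qed

theorem lemma3p9:
  fixes V :: "'v set" and E :: "'e set" and I :: "'e \<Rightarrow> 'v set" and s t :: 'v
    and P :: "('v list \<times> 'e list) set"
  assumes "is_grapht V E I s t"
    and "linkage V E I s t P"
    and "card (delta E I t - sys_edges P) = 1"
    and "\<not> (\<exists>P'. linkage V E I s t P' \<and> delta_sys E I P' t \<subset> delta_sys E I P t)"
  shows "\<forall>Q. linkage V E I s t Q \<longrightarrow>
           finite (delta E I t - sys_edges Q) \<and> card (delta E I t - sys_edges Q) \<le> 1"
proof (intro allI impI)
  fix Q assume QL: "linkage V E I s t Q"
  note G = assms(1)
  have st: "s \<noteq> t" and sV: "s \<in> V" and tV: "t \<in> V" and gr: "is_graph V E I"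
    using G unfolding is_grapht_def by auto
  have PE: "edge_disjoint_st_system V E I s t P" using assms(2) unfolding linkage_def links_def by simp
  have QE: "edge_disjoint_st_system V E I s t Q" using QL unfolding linkage_def links_def by simp
  obtain f where f: "delta E I t - sys_edges P = {f}" using assms(3) card_1_singletonE by blast
  have dP: "delta_sys E I P t = delta E I t - {f}" using f unfolding delta_sys_def by blast
  have fd: "f \<in> delta E I t" "f \<notin> sys_edges P" using f by auto
  have minimal: "\<not> (linkage V E I s t P' \<and> delta_sys E I P' t \<subset> delta E I t - {f})" for P'
    using assms(4) dP by auto
  show "finite (delta E I t - sys_edges Q) \<and> card (delta E I t - sys_edges Q) \<le> 1"
  proof (rule ccontr)
    assume neg: "\<not> (finite (delta E I t - sys_edges Q) \<and> card (delta E I t - sys_edges Q) \<le> 1)"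
    obtain g1 g2 where g: "g1 \<in> delta E I t" "g1 \<notin> sys_edges Q" "g2 \<in> delta E I t" "g2 \<notin> sys_edges Q" "g1 \<noteq> g2"
      using two_elems[OF neg] by blast
    show False
    proof (cases "f \<in> sys_edges Q")
      case False
      have "\<exists>g. g \<in> delta E I t \<and> g \<notin> sys_edges Q \<and> g \<noteq> f"
      proof (cases "g1 = f")
        case True thus ?thesis using g by (intro exI[of _ g2]) simp
      next
        case False thus ?thesis using g by (intro exI[of _ g1]) simp
      qed
      then obtain g where gg: "g \<in> delta E I t" "g \<notin> sys_edges Q" "g \<noteq> f" by blast
      have "delta_sys E I Q t \<subseteq> delta E I t - {f}" using False unfolding delta_sys_def by blast
      moreover have "g \<in> delta E I t - {f}" "g \<notin> delta_sys E I Q t" using gg unfolding delta_sys_def by auto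
      ultimately have "delta_sys E I Q t \<subset> delta E I t - {f}" by blast
      thus False using minimal QL by blast
    next
      case True
      have gf: "g1 \<noteq> f" "g2 \<noteq> f" using g True by auto
      from True obtain qs where qs: "qs \<in> Q" "f \<in> set (snd qs)" by (rule sys_edgesE)
      define Q0 where "Q0 = Q - {qs}"
      have Q0E: "edge_disjoint_st_system V E I s t Q0" using eds_subset[OF QE] unfolding Q0_def by blast
      have EQ0: "sys_edges Q0 \<subseteq> sys_edges Q" unfolding Q0_def sys_edges_def by blast
      have fQ0: "f \<notin> sys_edges Q0"
      proof
        assume "f \<in> sys_edges Q0"
        then obtain r where r: "r \<in> Q0" "f \<in> set (snd r)" by (rule sys_edgesE)
        have "r = qs" using edsD(2)[OF QE _ qs(1) r(2) qs(2)] r(1) unfolding Q0_def by blast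
        thus False using r(1) unfolding Q0_def by blast
      qed
      have lQ0: "last_e ` Q0 \<subseteq> delta E I t - {f}"
        using delta_sys_last[OF st Q0E] fQ0 unfolding delta_sys_def by blast
      define S where "S = {v. \<exists>ws wes. is_path V E I (ws, wes) \<and> hd ws = s \<and> last ws = v \<and> t \<notin> set ws
          \<and> residual Q0 (ws, wes)}"
      have sS: "s \<in> S"
      proof -
        have "is_path V E I ([s], [])" unfolding is_path_def using sV by simp
        moreover have "residual Q0 ([s], [])" unfolding residual_def by simp
        ultimately show ?thesis unfolding S_def using st by fastforce
      qed
      have tS: "t \<notin> S"
      proof
        assume "t \<in> S"
        then obtain ws wes where tw: "is_path V E I (ws, wes)" "last ws = t" "t \<notin> set ws" unfolding S_def by blast
        have "ws \<noteq> []" using path_D(1)[OF tw(1)] .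
        hence "last ws \<in> set ws" by (rule last_in_set)
        thus False using tw(2,3) by simp
      qed
      have cl: "x \<in> S" if y: "y \<in> S" and xt: "x \<noteq> t" and eE: "e \<in> E" and Ie: "I e = {x, y}"
        and r: "e \<notin> sys_edges Q0 \<or> used_dir Q0 e x y" for x y e
      proof -
        obtain ws wes where W: "is_path V E I (ws, wes)" "hd ws = s" "last ws = y" "t \<notin> set ws"
          "residual Q0 (ws, wes)" using y unfolding S_def by blast
        note WP = path_D[OF W(1)]
        have lw: "length ws = Suc (length wes)" using WP(1,2) by (cases ws) auto
        show ?thesis
        proof (cases "x \<in> set ws")
          case True
          then obtain k where k: "k < length ws" "ws ! k = x" by (auto simp: in_set_conv_nth)
          have "is_path V E I (take (Suc k) ws, take k wes)" using path_prefix[OF W(1) k(1)] .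
          moreover have "hd (take (Suc k) ws) = s" using W(2) WP(1) by (simp add: hd_take)
          moreover have "last (take (Suc k) ws) = x" using k by (simp add: take_Suc_conv_app_nth)
          moreover have "t \<notin> set (take (Suc k) ws)" using W(4) in_set_takeD by fastforce
          moreover have "residual Q0 (take (Suc k) ws, take k wes)" using residual_prefix[OF W(5) lw] .
          ultimately show ?thesis unfolding S_def by blast
        next
          case False
          have xV: "x \<in> V" using gr eE Ie unfolding is_graph_def by blast
          have "is_path V E I (ws @ [x], wes @ [e])" using path_snoc[OF W(1) False xV eE] Ie W(3)
            by (simp add: insert_commute)
          moreover have "hd (ws @ [x]) = s" using W(2) WP(1) by simp
          moreover have "last (ws @ [x]) = x" by simp
          moreover have "t \<notin> set (ws @ [x])" using W(4) xt by simp
          moreover have "residual Q0 (ws @ [x], wes @ [e])" using residual_snoc[OF W(5) lw] r W(3) by simp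
          ultimately show ?thesis unfolding S_def by blast
        qed
      qed
      show False
      proof (cases "\<exists>h u. h \<in> delta E I t \<and> h \<notin> sys_edges Q0 \<and> h \<noteq> f \<and> u \<in> S \<and> I h = {u, t}")
        case True
        then obtain h u where h: "h \<in> delta E I t" "h \<notin> sys_edges Q0" "h \<noteq> f" "u \<in> S" "I h = {u, t}" by blast
        obtain ws wes where W: "is_path V E I (ws, wes)" "hd ws = s" "last ws = u" "t \<notin> set ws"
          "residual Q0 (ws, wes)" using h(4) unfolding S_def by blast
        note WP = path_D[OF W(1)]
        have lw: "length ws = Suc (length wes)" using WP(1,2) by (cases ws) auto
        have hE: "h \<in> E" using h(1) unfolding delta_def by simp
        define W' where "W' = (ws @ [t], wes @ [h])"
        have W'p: "is_path V E I W'" unfolding W'_def using path_snoc[OF W(1) W(4) tV hE] h(5) W(3) by simp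
        have W'st: "st_path V E I s t W'" unfolding st_path_def W'_def using W'p[unfolded W'_def] W(2) WP(1)
          by simp
        have W'r: "residual Q0 W'" unfolding W'_def using residual_snoc[OF W(5) lw] h(2) by simp
        have W'l: "last (snd W') \<notin> sys_edges Q0" unfolding W'_def using h(2) by simp
        have W'h: "hd (snd W') \<notin> sys_edges Q0"
        proof (cases "wes = []")
          case True thus ?thesis unfolding W'_def using h(2) by simp
        next
          case False
          have "wes ! 0 \<notin> sys_edges Q0 \<or> used_dir Q0 (wes ! 0) (ws ! Suc 0) (ws ! 0)"
            using W(5) False unfolding residual_def by simp
          moreover have "\<not> used_dir Q0 (wes ! 0) (ws ! Suc 0) (ws ! 0)"
          proof
            assume "used_dir Q0 (wes ! 0) (ws ! Suc 0) (ws ! 0)"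
            then obtain r j where r: "r \<in> Q0" "j < length (snd r)" "fst r ! Suc j = ws ! 0"
              unfolding used_dir_def by blast
            obtain vr er where rr: "r = (vr, er)" by fastforce
            have rs: "st_path V E I s t (vr, er)" using edsD(1)[OF Q0E r(1)] rr by simp
            have "Suc j < length vr" using r(2) rr path_D(1,2)[OF st_path_D(1)[OF rs]] by (cases vr) auto
            hence "vr ! Suc j \<noteq> s" using st_not_s[OF rs] by blast
            moreover have "ws ! 0 = s" using W(2) WP(1) by (simp add: hd_conv_nth)
            ultimately show False using r(3) rr by simp
          qed
          ultimately show ?thesis unfolding W'_def using False by (simp add: hd_conv_nth nth_append)
        qed
        obtain B' where B': "edge_disjoint_st_system V E I s t B'" "first_e ` B' = insert (first_e W') (first_e ` Q0)"
          "last_e ` B' = insert (last_e W') (last_e ` Q0)"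
          using augment[OF st refl Q0E W'st W'r W'h W'l] by blast
        have lW': "last_e W' = h" unfolding W'_def last_e_def by simp
        have fW's: "first_e W' \<in> delta E I s" "first_e W' \<in> set (snd W')"
          using st_first_last(1,3)[of V E I s t "fst W'" "snd W'"] W'st st unfolding first_e_def by auto
        have BL: "linkage V E I s t B'"
        proof (rule linkage_of_first[OF st B'(1)])
          show "delta E I s \<subseteq> first_e ` B'"
          proof
            fix e assume e: "e \<in> delta E I s"
            then obtain r where r: "r \<in> Q" "e = first_e r" using first_of_linkage[OF st QL] by blast
            show "e \<in> first_e ` B'"
            proof (cases "r = qs")
              case False
              hence "r \<in> Q0" using r(1) unfolding Q0_def by blast
              hence "first_e r \<in> first_e ` Q0" by simp
              hence "e \<in> insert (first_e W') (first_e ` Q0)" using r(2) by simp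
              thus ?thesis using B'(2) by simp
            next
              case True
              have "first_e W' \<in> sys_edges Q" using QL fW's(1) unfolding linkage_def links_def by blast
              then obtain r' where r': "r' \<in> Q" "first_e W' \<in> set (snd r')" by (rule sys_edgesE)
              have "r' = qs"
              proof (rule ccontr)
                assume "r' \<noteq> qs"
                hence "r' \<in> Q0" using r'(1) unfolding Q0_def by blast
                hence "first_e W' \<in> sys_edges Q0" using sys_edgesI r'(2) by metis
                thus False using W'h unfolding first_e_def by simp
              qed
              obtain vq eq where qq: "qs = (vq, eq)" by fastforce
              have qst: "st_path V E I s t (vq, eq)" using edsD(1)[OF QE qs(1)] qq by simp
              have "first_e W' = hd eq"
                using st_edge_s[OF qst st, of "first_e W'"] r' \<open>r' = qs\<close> qq fW's(1) unfolding delta_def by simp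
              hence "e = first_e W'" using r(2) True qq unfolding first_e_def by simp
              thus ?thesis using B'(2) by simp
            qed
          qed
        qed
        have dB: "delta_sys E I B' t = insert h (last_e ` Q0)" using delta_sys_last[OF st B'(1)] B'(3) lW' by simp
        have "\<exists>g. g \<in> delta E I t \<and> g \<notin> sys_edges Q \<and> g \<noteq> f \<and> g \<noteq> h"
        proof (cases "g1 = h")
          case True thus ?thesis using g gf by (intro exI[of _ g2]) simp
        next
          case False thus ?thesis using g gf by (intro exI[of _ g1]) simp
        qed
        then obtain g where gg: "g \<in> delta E I t" "g \<notin> sys_edges Q" "g \<noteq> f" "g \<noteq> h" by blast
        have "g \<notin> last_e ` Q0"
        proof
          assume "g \<in> last_e ` Q0"
          hence "g \<in> delta_sys E I Q0 t" using delta_sys_last[OF st Q0E] by simp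
          thus False using gg(2) EQ0 unfolding delta_sys_def by blast
        qed
        have sub1: "delta_sys E I B' t \<subseteq> delta E I t - {f}" unfolding dB using lQ0 h(1) h(3) by blast
        have g_in: "g \<in> delta E I t - {f}" using gg by simp
        have g_out: "g \<notin> delta_sys E I B' t" unfolding dB using gg(4) \<open>g \<notin> last_e ` Q0\<close> by simp
        have "delta_sys E I B' t \<subset> delta E I t - {f}" using sub1 g_in g_out by blast
        thus False using minimal BL by blast
      next
        case False
        have "\<exists>R. edge_disjoint_st_system V E I s t R \<and> first_e ` R = first_e ` P \<and>
          (\<forall>r\<in>R. last_e r \<in> last_e ` Q0 \<or> (last_e r \<in> sys_edges P \<and> (\<exists>x\<in>S. I (last_e r) = {x, t})))"
          by (rule cut[OF st Q0E PE sS tS]) (rule cl; assumption)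
        then obtain R where R: "edge_disjoint_st_system V E I s t R" "first_e ` R = first_e ` P"
          "\<forall>r\<in>R. last_e r \<in> last_e ` Q0 \<or> (last_e r \<in> sys_edges P \<and> (\<exists>x\<in>S. I (last_e r) = {x, t}))"
          by blast
        have RL: "linkage V E I s t R" using linkage_of_first[OF st R(1)] first_of_linkage[OF st assms(2)] R(2)
          by simp
        have "last_e ` R \<subseteq> last_e ` Q0"
        proof
          fix e assume "e \<in> last_e ` R"
          then obtain r where r: "r \<in> R" "e = last_e r" by blast
          show "e \<in> last_e ` Q0"
          proof (cases "last_e r \<in> last_e ` Q0")
            case True thus ?thesis using r by simp
          next
            case nq: False
            then obtain x where x: "last_e r \<in> sys_edges P" "x \<in> S" "I (last_e r) = {x, t}" using R(3) r(1) by blast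
            have "last_e r \<in> last_e ` R" using r(1) by simp
            hence "last_e r \<in> delta_sys E I R t" using delta_sys_last[OF st R(1)] by simp
            hence ed: "last_e r \<in> delta E I t" unfolding delta_sys_def by simp
            have "last_e r \<noteq> f" using x(1) fd(2) by blast
            have "last_e r \<in> sys_edges Q0"
            proof (rule ccontr)
              assume nQ: "last_e r \<notin> sys_edges Q0"
              have "\<exists>h u. h \<in> delta E I t \<and> h \<notin> sys_edges Q0 \<and> h \<noteq> f \<and> u \<in> S \<and> I h = {u, t}"
                using ed nQ \<open>last_e r \<noteq> f\<close> x(2,3) by (intro exI[of _ "last_e r"] exI[of _ x]) simp
              thus False using False by (rule notE[rotated])
            qed
            hence "last_e r \<in> delta_sys E I Q0 t" using ed unfolding delta_sys_def by simp
            thus ?thesis using delta_sys_last[OF st Q0E] r(2) by simp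
          qed
        qed
        hence "last_e ` R \<subseteq> delta E I t - {f}" using lQ0 by (rule subset_trans)
        hence "delta_sys E I R t \<subseteq> delta E I t - {f}" using delta_sys_last[OF st R(1)] by simp
        moreover have "g1 \<in> delta E I t - {f}" using g(1) gf(1) by simp
        moreover have "g1 \<notin> delta_sys E I R t"
        proof
          assume "g1 \<in> delta_sys E I R t"
          hence "g1 \<in> last_e ` R" using delta_sys_last[OF st R(1)] by simp
          hence "g1 \<in> last_e ` Q0" using \<open>last_e ` R \<subseteq> last_e ` Q0\<close> by blast
          hence "g1 \<in> delta_sys E I Q0 t" using delta_sys_last[OF st Q0E] by simp
          thus False using g(2) EQ0 unfolding delta_sys_def by blast
        qed
        ultimately have "delta_sys E I R t \<subset> delta E I t - {f}" by blast
        thus False using minimal RL by blast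
      qed
    qed
  qed
qed


end
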